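(* Let $f$ be analytic on the unit disk $\mathbb{D}=\{z\in\mathbb{C}:|z|<1\}$ with $\operatorname{Diam} f(\mathbb{D})\le 2$. Then $|f'(0)|\le 1$. Moreover, $|f'(0)|=1$ if and only if $f(z)=a+cz$ for all $z\in\mathbb{D}$, for some constants $a,c\in\mathbb{C}$ with $|c|=1$.
   Context: For a set $E\subset\mathbb{C}$, $\operatorname{Diam}E=\sup_{z,w\in E}|z-w|$. *)

theory Defs
  imports "HOL-Complex_Analysis.Complex_Analysis"
begin

text \<open>Diameter of a set of complex numbers as an extended real: sup of |z - w| over z, w in E
  (equals infinity for unbounded E, and bottom for the empty set).\<close>
definition Diam :: "complex set \<Rightarrow> ereal" where
  "Diam E = (SUP z\<in>E. SUP w\<in>E. ereal (cmod (z - w)))"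

end

theory Submission
  imports Defs
begin

lemma schwarz_le:
  fixes h :: "complex \<Rightarrow> complex"
  assumes hol: "h holomorphic_on ball 0 1" and h0: "h 0 = 0"
    and bd: "\<And>z. z \<in> ball 0 1 \<Longrightarrow> cmod (h z) \<le> 1"
    and z: "z \<in> ball 0 1"
  shows "cmod (h z) \<le> cmod z"
proof (rule field_le_mult_one_interval)
  fix t :: real assume t: "0 < t" "t < 1"
  have "cmod ((\<lambda>w. of_real t * h w) z) \<le> cmod z"
  proof (rule Schwarz_Lemma(1))
    show "(\<lambda>w. of_real t * h w) holomorphic_on ball 0 1"
      using hol by (intro holomorphic_intros)
    show "of_real t * h 0 = 0" using h0 by simp
    show "cmod (of_real t * h w) < 1" if "cmod w < 1" for w
    proof -
      have "cmod (h w) \<le> 1" using bd that by simp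
      then have "t * cmod (h w) \<le> t" using t by (simp add: mult_left_le)
      then have "t * cmod (h w) < 1" using t by linarith
      then show ?thesis using t by (simp add: norm_mult)
    qed
    show "cmod z < 1" using z by simp
  qed
  then show "t * cmod (h z) \<le> cmod z" using t by (simp add: norm_mult)
qed

lemma diam_bound:
  assumes "Diam (f ` ball 0 1) \<le> 2" "u \<in> ball 0 1" "v \<in> ball 0 1"
  shows "cmod (f u - f v) \<le> 2"
proof -
  have "ereal (cmod (f u - f v)) \<le> (SUP w\<in>f ` ball 0 1. ereal (cmod (f u - w)))"
    using assms by (intro SUP_upper) auto
  also have "\<dots> \<le> Diam (f ` ball 0 1)"
    unfolding Diam_def using assms
    by (intro SUP_upper[where f="\<lambda>z. SUP w\<in>f ` ball 0 1. ereal (cmod (z - w))"]) auto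
  also have "\<dots> \<le> 2" by fact
  finally show ?thesis by simp
qed

theorem theorem2:
  fixes f :: "complex \<Rightarrow> complex"
  assumes "f holomorphic_on ball 0 1"
    and "Diam (f ` ball 0 1) \<le> 2"
  shows "cmod (deriv f 0) \<le> 1 \<and>
         (cmod (deriv f 0) = 1 \<longleftrightarrow>
           (\<exists>a c. cmod c = 1 \<and> (\<forall>z\<in>ball 0 1. f z = a + c * z)))"
proof -
  note hol = assms(1)
  have D: "\<And>u v. u \<in> ball 0 1 \<Longrightarrow> v \<in> ball 0 1 \<Longrightarrow> cmod (f u - f v) \<le> 2"
    using diam_bound[OF assms(2)] by blast
  have df: "(f has_field_derivative deriv f w) (at w)" if "w \<in> ball 0 1" for w
    using hol that by (intro holomorphic_derivI) auto
  define g where "g z = (f z - f (- z)) / 2" for z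
  have holm: "(\<lambda>z. f (- z)) holomorphic_on ball 0 1"
  proof -
    have u: "(\<lambda>z::complex. - z) holomorphic_on ball 0 1" by (intro holomorphic_intros)
    have "uminus ` ball (0::complex) 1 \<subseteq> ball 0 1" by auto
    from holomorphic_on_compose_gen[OF u hol] this show ?thesis by (simp add: o_def)
  qed
  have holg: "g holomorphic_on ball 0 1"
    unfolding g_def using hol holm
    by (intro holomorphic_intros) auto
  have g0: "g 0 = 0" by (simp add: g_def)
  have gle: "cmod (g z) \<le> cmod z" if "z \<in> ball 0 1" for z
  proof (rule schwarz_le[OF holg g0 _ that])
    fix w :: complex assume "w \<in> ball 0 1"
    then show "cmod (g w) \<le> 1" using D[of w "-w"] by (simp add: g_def norm_divide)
  qed
  have glt: "cmod (g z) < 1" if "cmod z < 1" for z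
    using gle[of z] that by simp
  have dg: "deriv g 0 = deriv f 0"
  proof -
    have d0: "(f has_field_derivative deriv f 0) (at (- 0))" using df[of 0] by simp
    have "(uminus has_field_derivative -1) (at (0::complex))"
      by (auto intro!: derivative_eq_intros)
    from DERIV_chain2[OF d0 this]
    have "((\<lambda>z. f (- z)) has_field_derivative deriv f 0 * (-1)) (at 0)" by simp
    then have "(g has_field_derivative (deriv f 0 - deriv f 0 * (-1)) / 2) (at 0)"
      unfolding g_def using df[of 0] by (intro DERIV_cdivide DERIV_diff) auto
    then show ?thesis by (simp add: DERIV_imp_deriv)
  qed
  have part1: "cmod (deriv f 0) \<le> 1"
    using Schwarz_Lemma(2)[OF holg g0 glt, of 0] dg by simp
  show ?thesis
  proof (intro conjI iffI part1)
    assume eq: "cmod (deriv f 0) = 1"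
    define c where "c = deriv f 0"
    obtain \<alpha> where \<alpha>: "\<And>z. cmod z < 1 \<Longrightarrow> g z = \<alpha> * z" "cmod \<alpha> = 1"
      using Schwarz_Lemma(3)[OF holg g0 glt, of 0] eq dg by auto
    have c1: "cmod c = 1" using eq c_def by simp
    have ccnj: "c * cnj c = 1"
      using complex_norm_square[of c] c1 by simp
    have "(g has_field_derivative \<alpha>) (at 0)"
    proof (rule has_field_derivative_transform_within_open[where S="ball 0 1" and f="\<lambda>z. \<alpha> * z"])
      show "((*) \<alpha> has_field_derivative \<alpha>) (at 0)" by (auto intro!: derivative_eq_intros)
    qed (auto simp: \<alpha>)
    then have \<alpha>c: "\<alpha> = c" using dg c_def by (simp add: DERIV_imp_deriv)
    have key: "Re (\<i> * cnj c * deriv f w) = 0" if w: "w \<in> ball 0 1" for w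
    proof (cases "w = 0")
      case True
      then show ?thesis using ccnj c_def by (simp add: mult.commute)
    next
      case False
      define z where "z = - w"
      have z: "z \<in> ball 0 1" "z \<noteq> 0" using w False by (auto simp: z_def)
      define \<Psi> where "\<Psi> s = f z - f (- (exp (\<i> * s) * z))" for s
      have bound: "cmod (\<Psi> (of_real t)) \<le> 2 * cmod z" for t :: real
      proof -
        define h where "h u = (f u - f (- (exp (\<i> * of_real t) * u))) / 2" for u
        have e1: "cmod (exp (\<i> * of_real t)) = 1" by simp
        have u: "(\<lambda>u::complex. - (exp (\<i> * of_real t) * u)) holomorphic_on ball 0 1"
          by (intro holomorphic_intros)
        have "(\<lambda>u. - (exp (\<i> * of_real t) * u)) ` ball (0::complex) 1 \<subseteq> ball 0 1"
          using e1 by (auto simp: norm_mult)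
        from holomorphic_on_compose_gen[OF u hol] this
        have hm: "(\<lambda>u. f (- (exp (\<i> * of_real t) * u))) holomorphic_on ball 0 1"
          by (simp add: o_def)
        have "cmod (h z) \<le> cmod z"
        proof (rule schwarz_le[OF _ _ _ z(1)])
          show "h holomorphic_on ball 0 1" unfolding h_def using hol hm
            by (intro holomorphic_intros) auto
          show "h 0 = 0" by (simp add: h_def)
          fix u :: complex assume u: "u \<in> ball 0 1"
          then have "- (exp (\<i> * of_real t) * u) \<in> ball 0 1" using e1 by (simp add: norm_mult)
          then show "cmod (h u) \<le> 1" using D[OF u] by (simp add: h_def norm_divide)
        qed
        then show ?thesis by (simp add: h_def \<Psi>_def norm_divide)
      qed
      have \<Psi>0: "\<Psi> 0 = 2 * c * z"
        using \<alpha>(1)[of z] z \<alpha>c by (simp add: \<Psi>_def g_def)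
      have dfw: "(f has_field_derivative deriv f w) (at (- (exp (\<i> * 0) * z)))"
        using df[OF w] by (simp add: z_def)
      have "((\<lambda>s. - (exp (\<i> * s) * z)) has_field_derivative - (\<i> * z)) (at 0)"
        by (auto intro!: derivative_eq_intros)
      from DERIV_chain2[OF dfw this]
      have "((\<lambda>s. f (- (exp (\<i> * s) * z))) has_field_derivative deriv f w * - (\<i> * z)) (at 0)" .
      then have "(\<Psi> has_field_derivative - (deriv f w * - (\<i> * z))) (at (of_real 0))"
        unfolding \<Psi>_def by (auto intro!: derivative_eq_intros)
      then have "((\<lambda>t. \<Psi> (of_real t)) has_vector_derivative - (deriv f w * - (\<i> * z))) (at 0)"
        by (rule has_vector_derivative_real_field)
      define P where "P = - (deriv f w * - (\<i> * z))"
      have vd: "((\<lambda>t. \<Psi> (of_real t)) has_vector_derivative P) (at 0)"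
        using \<open>((\<lambda>t. \<Psi> (of_real t)) has_vector_derivative _) _\<close> by (simp add: P_def)
      define \<phi> where "\<phi> t = (Re (\<Psi> (of_real t)))^2 + (Im (\<Psi> (of_real t)))^2" for t
      have der: "(\<phi> has_real_derivative (2 * Re (\<Psi> 0) * Re P + 2 * Im (\<Psi> 0) * Im P)) (at 0)"
      proof -
        have r: "((\<lambda>t. Re (\<Psi> (of_real t))) has_real_derivative Re P) (at 0)"
          by (rule has_field_derivative_Re[OF vd])
        have i: "((\<lambda>t. Im (\<Psi> (of_real t))) has_real_derivative Im P) (at 0)"
          by (rule has_field_derivative_Im[OF vd])
        have "(\<phi> has_real_derivative (of_nat 2 * (Re P * Re (\<Psi> (of_real 0)) ^ (2 - Suc 0))
            + of_nat 2 * (Im P * Im (\<Psi> (of_real 0)) ^ (2 - Suc 0)))) (at 0)"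
          unfolding \<phi>_def by (intro DERIV_add DERIV_power r i)
        then show ?thesis by (simp add: ac_simps)
      qed
      moreover have "\<forall>y. \<bar>0 - y\<bar> < 1 \<longrightarrow> \<phi> y \<le> \<phi> 0"
      proof (intro allI impI)
        fix y :: real
        have "\<phi> y = (cmod (\<Psi> (of_real y)))^2" by (simp add: \<phi>_def cmod_power2)
        also have "\<dots> \<le> (2 * cmod z)^2" using bound[of y] by (intro power_mono) auto
        also have "\<dots> = (cmod (\<Psi> (of_real 0)))^2" using \<Psi>0 c1 by (simp add: norm_mult)
        also have "\<dots> = \<phi> 0" by (simp add: \<phi>_def cmod_power2)
        finally show "\<phi> y \<le> \<phi> 0" .
      qed
      ultimately have "2 * Re (\<Psi> 0) * Re P + 2 * Im (\<Psi> 0) * Im P = 0"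
        by (intro DERIV_local_max[where d=1]) auto
      then have "Re (cnj (\<Psi> 0) * P) = 0" by simp
      moreover have "cnj (\<Psi> 0) * P = 2 * of_real ((cmod z)^2) * (\<i> * cnj c * deriv f w)"
        unfolding \<Psi>0 P_def complex_norm_square by (simp add: algebra_simps)
      ultimately have "2 * (cmod z)^2 * Re (\<i> * cnj c * deriv f w) = 0"
        by (simp del: of_real_power)
      then show ?thesis using z by simp
    qed
    define k where "k w = \<i> * cnj c * deriv f w" for w
    have holk: "k holomorphic_on ball 0 1"
      unfolding k_def using hol by (intro holomorphic_intros) auto
    have k0: "k 0 = \<i>" using ccnj c_def by (simp add: k_def mult.commute)
    have "k constant_on ball 0 1"
    proof (rule ccontr)
      assume nc: "\<not> k constant_on ball 0 1"
      have "open (k ` ball 0 1)"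
        by (rule open_mapping_thm[OF holk open_ball _ open_ball order_refl nc]) simp
      moreover have "\<i> \<in> k ` ball 0 1" using k0 by (metis centre_in_ball image_eqI zero_less_one)
      ultimately obtain e where e: "e > 0" "ball \<i> e \<subseteq> k ` ball 0 1"
        by (meson open_contains_ball)
      then have "\<i> + of_real (e/2) \<in> k ` ball 0 1" by (auto simp: dist_norm)
      then obtain v where "v \<in> ball 0 1" "k v = \<i> + of_real (e/2)" by auto
      moreover from key[of v] \<open>v \<in> ball 0 1\<close> have "Re (k v) = 0" by (simp only: k_def)
      ultimately show False using e by simp
    qed
    then have kc: "k w = \<i>" if "w \<in> ball 0 1" for w
      using k0 that unfolding constant_on_def by force
    have dfc: "deriv f w = c" if "w \<in> ball 0 1" for w
    proof -
      have "\<i> * cnj c * deriv f w = \<i>" using kc[OF that] by (simp add: k_def)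
      then have "cnj c * deriv f w = 1" by (metis complex_i_not_zero mult.assoc mult_cancel_left1)
      then have "c * (cnj c * deriv f w) = c" by simp
      then show ?thesis using ccnj by (simp add: mult.assoc[symmetric])
    qed
    have "\<exists>a. \<forall>x\<in>ball 0 1. f x - c * x = a"
    proof (rule has_field_derivative_zero_constant)
      fix x :: complex assume x: "x \<in> ball 0 1"
      have "((\<lambda>x. f x - c * x) has_field_derivative (deriv f x - c)) (at x)"
        using df[OF x] by (auto intro!: derivative_eq_intros)
      then show "((\<lambda>x. f x - c * x) has_field_derivative 0) (at x within ball 0 1)"
        using dfc[OF x] by (simp add: has_field_derivative_at_within)
    qed simp
    then obtain a where "\<forall>x\<in>ball 0 1. f x - c * x = a" by blast
    then have "\<forall>x\<in>ball 0 1. f x = a + c * x" by (auto simp: algebra_simps)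
    then show "\<exists>a c. cmod c = 1 \<and> (\<forall>z\<in>ball 0 1. f z = a + c * z)" using c1 by blast
  next
    assume "\<exists>a c. cmod c = 1 \<and> (\<forall>z\<in>ball 0 1. f z = a + c * z)"
    then obtain a c where ac: "cmod c = 1" "\<And>z. z \<in> ball 0 1 \<Longrightarrow> f z = a + c * z" by blast
    have "((\<lambda>z. a + c * z) has_field_derivative c) (at 0)"
      by (auto intro!: derivative_eq_intros)
    then have "(f has_field_derivative c) (at 0)"
      by (rule has_field_derivative_transform_within_open[where S="ball 0 1"]) (auto simp: ac)
    then show "cmod (deriv f 0) = 1" using ac by (simp add: DERIV_imp_deriv)
  qed
qed

end
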